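(* Let $\{\mathbf Z_i(n), i\in\mathbb N\}$ be a critical GWBP/$\infty$ with mean matrix $\mathbf M\in\mathcal M_1$ and $\mathbf F(\mathbf s)\neq\mathbf M\mathbf s$. Then $$\lim_{z\uparrow1}\sup_{i\in\mathbb N}\frac{(1-z)\mathbb EZ_i-\mathbb E(1-z^{Z_i})}{(1-z)\mathbb EZ_i}=0$$ and $$\lim_{z\uparrow1}\sup_{i\in\mathbb N}\frac{(1-z)\mathbb EZ_i-\sum_{j\in\mathbb N}\mathbb E(1-z^{Z_{ij}})}{(1-z)\mathbb EZ_i}=0.$$
   Context: A GWBP/$\infty$ has types $\mathbb N=\{1,2,\dots\}$. Each particle lives one unit of time; a type-$i$ particle produces, independently of everything else, a random vector $\mathbf Z_i=(Z_{ij})_{j\in\mathbb N}$ of children ($Z_{ij}$ of type $j$), with $Z_i:=\sum_jZ_{ij}<\infty$ a.s. $\mathbf Z_i(n)=(Z_{ij}(n))_j$ is the generation-$n$ population vector starting from one type-$i$ particle. $F_i(\mathbf s)=\mathbb E\prod_js_j^{Z_{ij}}$ for $\mathbf s\in[0,1]^{\mathbb N}$; "$\mathbf F(\mathbf s)\neq\mathbf M\mathbf s$" means it is not true that $F_i(\mathbf s)=\sum_jM_{ij}s_j$ for all $i,\mathbf s$. Mean matrix $\mathbf M=(M_{ij})$, $M_{ij}=\mathbb EZ_{ij}$, $M^{(n)}_{ij}=\mathbb EZ_{ij}(n)$, $M_i=\sum_jM_{ij}=\mathbb EZ_i$. Irreducible: for all $i,j$ some $M^{(n)}_{ij}>0$;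 aperiodic: gcd of such $n$ is 1; then $\lim_n(M^{(n)}_{ij})^{1/n}=1/R$ for a common $R$; critical: $R=1$. $\mathbf M\in\mathcal M_1$ means: (i) irreducible, aperiodic, $R=1$, 1-recurrent ($\sum_nM^{(n)}_{ij}=\infty$) and 1-positive ($\lim_nM^{(n)}_{ij}>0$ for all $i,j$); then there are positive eigenvectors $\mathbf v\mathbf M=\mathbf v$, $\mathbf M\mathbf u^T=\mathbf u^T$, unique up to positive multiples, normalized with $\sum_jv_ju_j=1$; (ii) $\sum_jv_j=1$ and $\sup_iu_i<\infty$; (iii) $\lim_{N\to\infty}\sup_iM_i^{-1}\sum_{j>N}M_{ij}=0$ and $\lim_{K\to\infty}\sup_iM_i^{-1}\mathbb E[Z_i;Z_i>K]=0$. *)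

theory Defs
  imports "HOL-Probability.Probability"
begin

text \<open>For each type i,
  P i is the offspring distribution: a distribution of the random vector
  Z_i = (Z_ij)_j, represented as a function nat => nat.\<close>

type_synonym offspring = "nat \<Rightarrow> (nat \<Rightarrow> nat) pmf"

text \<open>Z_i is finite a.s.: every offspring vector in the support has finite support.\<close>
definition gwbp_inf :: "offspring \<Rightarrow> bool" where
  "gwbp_inf P \<longleftrightarrow> (\<forall>i. \<forall>z\<in>set_pmf (P i). finite {j. z j \<noteq> 0})"

definition ztot :: "(nat \<Rightarrow> nat) \<Rightarrow> nat" where
  "ztot z = (\<Sum>j\<in>{j. z j \<noteq> 0}. z j)"

definition meanM :: "offspring \<Rightarrow> nat \<Rightarrow> nat \<Rightarrow> real" where
  "meanM P i j = measure_pmf.expectation (P i) (\<lambda>z. real (z j))"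

definition meanTot :: "offspring \<Rightarrow> nat \<Rightarrow> real" where
  "meanTot P i = measure_pmf.expectation (P i) (\<lambda>z. real (ztot z))"

primrec mpow :: "offspring \<Rightarrow> nat \<Rightarrow> nat \<Rightarrow> nat \<Rightarrow> ennreal" where
  "mpow P 0 i j = (if i = j then 1 else 0)"
| "mpow P (Suc n) i j = (\<Sum>k. mpow P n i k * ennreal (meanM P k j))"

definition pgf :: "offspring \<Rightarrow> nat \<Rightarrow> (nat \<Rightarrow> real) \<Rightarrow> real" where
  "pgf P i s = measure_pmf.expectation (P i) (\<lambda>z. \<Prod>j\<in>{j. z j \<noteq> 0}. s j ^ z j)"

definition in_M1 :: "offspring \<Rightarrow> bool" where
  "in_M1 P \<longleftrightarrow>
     \<comment> \<open>(i) irreducible\<close>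
     (\<forall>i j. \<exists>n. mpow P n i j > 0)
     \<comment> \<open>aperiodic\<close>
   \<and> (\<forall>i. Gcd {n. 0 < n \<and> mpow P n i i > 0} = 1)
     \<comment> \<open>R = 1: lim (M^(n)_ij)^(1/n) = 1\<close>
   \<and> (\<forall>i j. (\<lambda>n. root n (enn2real (mpow P n i j))) \<longlonglongrightarrow> 1)
     \<comment> \<open>1-recurrent\<close>
   \<and> (\<forall>i j. (\<Sum>n. mpow P n i j) = \<infinity>)
     \<comment> \<open>1-positive\<close>
   \<and> (\<forall>i j. \<exists>L. L > 0 \<and> (\<lambda>n. mpow P n i j) \<longlonglongrightarrow> L)
     \<comment> \<open>(i),(ii) positive eigenvectors, normalized\<close>
   \<and> (\<exists>v u :: nat \<Rightarrow> real.
        (\<forall>j. v j > 0) \<and> (\<forall>i. u i > 0)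
      \<and> (\<forall>j. ((\<lambda>i. v i * meanM P i j) sums v j))
      \<and> (\<forall>i. ((\<lambda>j. meanM P i j * u j) sums u i))
      \<and> ((\<lambda>j. v j * u j) sums 1)
      \<and> (v sums 1)
      \<and> bdd_above (range u))
     \<comment> \<open>(iii)\<close>
   \<and> ((\<lambda>N. SUP i. (\<Sum>j. meanM P i (j + Suc N)) / meanTot P i) \<longlonglongrightarrow> 0)
   \<and> ((\<lambda>K. SUP i. measure_pmf.expectation (P i)
                      (\<lambda>z. if ztot z > K then real (ztot z) else 0) / meanTot P i)
        \<longlonglongrightarrow> 0)"

end

theory Submission imports Defs begin

lemma scalar_bound:
  fixes x :: real and k K :: nat
  assumes "0 \<le> x" "x \<le> 1"
  shows "0 \<le> (1 - x) * k - (1 - x ^ k)"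
    and "(1 - x) * k - (1 - x ^ k) \<le> (1 - x) * ((1 - x ^ K) * k + (if k > K then real k else 0))"
proof -
  have eq: "(1 - x) * k - (1 - x ^ k) = (1 - x) * (\<Sum>l<k. 1 - x ^ l)"
  proof -
    have "1 - x ^ k = (1 - x) * (\<Sum>l<k. x ^ l)"
      using power_diff_1_eq[of x k] by (simp add: algebra_simps)
    moreover have "(\<Sum>l<k. 1 - x ^ l) = real k - (\<Sum>l<k. x ^ l)"
      by (simp add: sum_subtractf)
    ultimately show ?thesis by (simp only: right_diff_distrib)
  qed
  have t0: "\<And>l. 0 \<le> 1 - x ^ l" using assms by (simp add: power_le_one)
  have s0: "0 \<le> (\<Sum>l<k. 1 - x ^ l)" by (rule sum_nonneg) (use t0 in auto)
  show "0 \<le> (1 - x) * k - (1 - x ^ k)" unfolding eq using s0 assms by simp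
  have "(\<Sum>l<k. 1 - x ^ l) \<le> (1 - x ^ K) * k + (if k > K then real k else 0)"
  proof (cases "k > K")
    case True
    have "(\<Sum>l<k. 1 - x ^ l) \<le> (\<Sum>l<k. 1)"
      by (rule sum_mono) (use assms in simp)
    moreover have "0 \<le> (1 - x ^ K) * k" using t0[of K] by simp
    ultimately show ?thesis using True by simp
  next
    case False
    have "(\<Sum>l<k. 1 - x ^ l) \<le> (\<Sum>l<k. 1 - x ^ K)"
    proof (rule sum_mono)
      fix l assume "l \<in> {..<k}"
      hence "l \<le> K" using False by simp
      hence "x ^ K \<le> x ^ l" using assms by (simp add: power_decreasing)
      thus "1 - x ^ l \<le> 1 - x ^ K" by simp
    qed
    thus ?thesis using False by (simp add: mult.commute)
  qed
  thus "(1 - x) * k - (1 - x ^ k) \<le> (1 - x) * ((1 - x ^ K) * k + (if k > K then real k else 0))"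
    unfolding eq using assms by (simp add: mult_left_mono)
qed

lemma tend_lemma:
  fixes r :: "nat \<Rightarrow> real \<Rightarrow> real" and T :: "nat \<Rightarrow> nat \<Rightarrow> real"
  assumes rb: "\<And>i x K. 0 < x \<Longrightarrow> x < 1 \<Longrightarrow> 0 \<le> r i x \<and> r i x \<le> (1 - x ^ K) + T K i"
    and T0: "\<And>K i. 0 \<le> T K i" and T1: "\<And>K i. T K i \<le> 1"
    and lim: "(\<lambda>K. SUP i. T K i) \<longlonglongrightarrow> 0"
  shows "((\<lambda>x. SUP i. r i x) \<longlongrightarrow> 0) (at_left 1)"
proof -
  have bT: "\<And>K. bdd_above (range (T K))" by (rule bdd_aboveI[where M=1]) (auto simp: T1)
  have key: "0 \<le> (SUP i. r i x) \<and> (SUP i. r i x) \<le> (1 - x ^ K) + (SUP i. T K i)"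
    if "0 < x" "x < 1" for x K
  proof -
    have ub: "\<And>i. r i x \<le> (1 - x ^ K) + (SUP i. T K i)"
      using rb[OF that, of _ K] cSUP_upper[OF _ bT[of K]] by (meson UNIV_I add_left_mono order_trans)
    have bd: "bdd_above (range (\<lambda>i. r i x))" by (rule bdd_aboveI[where M="(1 - x ^ K) + (SUP i. T K i)"]) (auto intro: ub)
    have "0 \<le> r 0 x" using rb[OF that] by blast
    also have "\<dots> \<le> (SUP i. r i x)" by (rule cSUP_upper[OF _ bd]) simp
    finally show ?thesis using \<open>\<And>i. r i x \<le> _\<close> by (simp add: cSUP_least)
  qed
  show ?thesis
  proof (rule tendstoI)
    fix e :: real assume e: "e > 0"
    from lim e obtain K where K: "\<bar>(SUP i. T K i)\<bar> < e / 2"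
      unfolding LIMSEQ_iff by (metis half_gt_zero order_refl real_norm_def diff_zero)
    have "((\<lambda>x::real. x ^ K) \<longlongrightarrow> 1 ^ K) (at_left 1)"
      by (intro tendsto_intros)
    hence "\<forall>\<^sub>F x in at_left 1. 1 - e / 2 < x ^ K"
      using e by (intro order_tendstoD(1)) auto
    moreover have "\<forall>\<^sub>F x in at_left (1::real). x \<in> {0<..<1}"
      by (rule eventually_at_left_real) simp
    ultimately show "\<forall>\<^sub>F x in at_left 1. dist (SUP i. r i x) 0 < e"
    proof eventually_elim
      case (elim x)
      hence x01: "0 < x" "x < 1" by auto
      have "(SUP i. T K i) \<le> \<bar>(SUP i. T K i)\<bar>" by simp
      with key[OF x01, of K] elim K show ?case unfolding dist_real_def by linarith
    qed
  qed
qed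


lemma int_tail:
  fixes p :: "'a pmf" and Z :: "'a \<Rightarrow> nat"
  assumes "integrable p (\<lambda>z. real (Z z))"
  shows "integrable p (\<lambda>z. if Z z > K then real (Z z) else 0)"
  by (rule Bochner_Integration.integrable_bound[OF assms]) auto

lemma tail_le:
  fixes p :: "'a pmf" and Z :: "'a \<Rightarrow> nat"
  assumes "integrable p (\<lambda>z. real (Z z))"
  shows "0 \<le> measure_pmf.expectation p (\<lambda>z. if Z z > K then real (Z z) else 0)"
    and "measure_pmf.expectation p (\<lambda>z. if Z z > K then real (Z z) else 0)
         \<le> measure_pmf.expectation p (\<lambda>z. real (Z z))"
  by (auto intro!: integral_mono int_tail assms)

lemma ratio_bound:
  fixes p :: "'a pmf" and Z :: "'a \<Rightarrow> nat" and g :: "'a \<Rightarrow> real" and x :: real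
  assumes intZ: "integrable p (\<lambda>z. real (Z z))" and x: "0 < x" "x < 1"
    and gb: "\<And>z. z \<in> set_pmf p \<Longrightarrow> 0 \<le> g z \<and>
          g z \<le> (1 - x) * ((1 - x ^ K) * real (Z z) + (if Z z > K then real (Z z) else 0))"
    and intg: "integrable p g"
  shows "0 \<le> measure_pmf.expectation p g / ((1 - x) * measure_pmf.expectation p (\<lambda>z. real (Z z)))
       \<and> measure_pmf.expectation p g / ((1 - x) * measure_pmf.expectation p (\<lambda>z. real (Z z)))
         \<le> (1 - x ^ K) + measure_pmf.expectation p (\<lambda>z. if Z z > K then real (Z z) else 0)
             / measure_pmf.expectation p (\<lambda>z. real (Z z))"
proof -
  define m where "m = measure_pmf.expectation p (\<lambda>z. real (Z z))"
  define T where "T = measure_pmf.expectation p (\<lambda>z. if Z z > K then real (Z z) else 0)"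
  have m0: "0 \<le> m" unfolding m_def by simp
  have T0: "0 \<le> T" unfolding T_def using tail_le(1)[OF intZ] .
  have xK: "x ^ K \<le> 1" using x by (simp add: power_le_one)
  have E0: "0 \<le> measure_pmf.expectation p g"
    by (rule integral_nonneg_AE) (use gb in \<open>auto simp: AE_measure_pmf_iff\<close>)
  have "measure_pmf.expectation p g \<le> measure_pmf.expectation p
          (\<lambda>z. (1 - x) * ((1 - x ^ K) * real (Z z) + (if Z z > K then real (Z z) else 0)))"
    by (rule integral_mono_AE[OF intg])
       (auto intro!: int_tail intZ simp: AE_measure_pmf_iff gb)
  also have "\<dots> = (1 - x) * ((1 - x ^ K) * m + T)"
    unfolding m_def T_def
    by (subst integral_mult_right_zero, subst Bochner_Integration.integral_add)
       (auto intro!: int_tail intZ)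
  finally have Eb: "measure_pmf.expectation p g \<le> (1 - x) * ((1 - x ^ K) * m + T)" .
  have "0 \<le> measure_pmf.expectation p g / ((1 - x) * m) \<and>
    measure_pmf.expectation p g / ((1 - x) * m) \<le> (1 - x ^ K) + T / m"
  proof (cases "m = 0")
    case True thus ?thesis using T0 xK by simp
  next
    case False
    hence mp: "m > 0" using m0 by simp
    have "measure_pmf.expectation p g / ((1 - x) * m) \<le> ((1 - x) * ((1 - x ^ K) * m + T)) / ((1 - x) * m)"
      using Eb mp x by (intro divide_right_mono) auto
    also have "\<dots> = (1 - x ^ K) + T / m" using mp x by (simp add: field_simps)
    finally show ?thesis using E0 mp x by simp
  qed
  thus ?thesis unfolding m_def T_def .
qed


lemma pt_lemma:
  fixes z :: "nat \<Rightarrow> nat" and x :: real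
  assumes fin: "finite {j. z j \<noteq> 0}" and x: "0 \<le> x" "x \<le> 1"
  shows "(\<lambda>j. 1 - x ^ z j) sums (\<Sum>j\<in>{j. z j \<noteq> 0}. 1 - x ^ z j)"
    and "\<And>n. \<bar>\<Sum>j<n. 1 - x ^ z j\<bar> \<le> real (ztot z)"
    and "\<bar>\<Sum>j\<in>{j. z j \<noteq> 0}. 1 - x ^ z j\<bar> \<le> real (ztot z)"
    and "0 \<le> (1 - x) * real (ztot z) - (\<Sum>j\<in>{j. z j \<noteq> 0}. 1 - x ^ z j) \<and>
         (1 - x) * real (ztot z) - (\<Sum>j\<in>{j. z j \<noteq> 0}. 1 - x ^ z j)
         \<le> (1 - x) * ((1 - x ^ K) * real (ztot z) + (if ztot z > K then real (ztot z) else 0))"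
proof -
  let ?S = "{j. z j \<noteq> 0}"
  have f0: "\<And>l. 0 \<le> 1 - x ^ l" using x by (simp add: power_le_one)
  have fk: "\<And>k. 1 - x ^ k \<le> real k"
  proof -
    fix k
    have "0 \<le> (1 - x) * real k - (1 - x ^ k)" by (rule scalar_bound(1)[OF x])
    moreover have "(1 - x) * real k \<le> real k" using x by (simp add: mult_left_le_one_le)
    ultimately show "1 - x ^ k \<le> real k" by linarith
  qed
  have zt: "real (ztot z) = (\<Sum>j\<in>?S. real (z j))" unfolding ztot_def by simp
  show "(\<lambda>j. 1 - x ^ z j) sums (\<Sum>j\<in>?S. 1 - x ^ z j)"
    by (rule sums_finite[OF fin]) simp
  have hS: "(\<Sum>j\<in>?S. 1 - x ^ z j) \<le> real (ztot z)"
    unfolding zt by (rule sum_mono) (rule fk)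
  show "\<bar>\<Sum>j\<in>?S. 1 - x ^ z j\<bar> \<le> real (ztot z)"
    using hS sum_nonneg[of ?S "\<lambda>j. 1 - x ^ z j"] f0 by auto
  show "\<bar>\<Sum>j<n. 1 - x ^ z j\<bar> \<le> real (ztot z)" for n
  proof -
    have "(\<Sum>j<n. 1 - x ^ z j) = (\<Sum>j\<in>{..<n} \<inter> ?S. 1 - x ^ z j)"
      by (rule sum.mono_neutral_right) auto
    also have "\<dots> \<le> (\<Sum>j\<in>?S. 1 - x ^ z j)"
      by (rule sum_mono2[OF fin]) (use f0 in auto)
    finally have "(\<Sum>j<n. 1 - x ^ z j) \<le> real (ztot z)" using hS by linarith
    moreover have "0 \<le> (\<Sum>j<n. 1 - x ^ z j)" by (rule sum_nonneg) (use f0 in auto)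
    ultimately show ?thesis by simp
  qed
  have eq: "(1 - x) * real (ztot z) - (\<Sum>j\<in>?S. 1 - x ^ z j)
      = (\<Sum>j\<in>?S. (1 - x) * real (z j) - (1 - x ^ z j))"
    unfolding zt by (simp add: sum_subtractf sum_distrib_left)
  have tail: "(\<Sum>j\<in>?S. (if z j > K then real (z j) else 0)) \<le> (if ztot z > K then real (ztot z) else 0)"
  proof (cases "ztot z > K")
    case True
    have "(\<Sum>j\<in>?S. (if z j > K then real (z j) else 0)) \<le> (\<Sum>j\<in>?S. real (z j))"
      by (rule sum_mono) simp
    thus ?thesis using True zt by simp
  next
    case False
    have "\<And>j. z j \<le> ztot z"
    proof -
      fix j show "z j \<le> ztot z"
      proof (cases "j \<in> ?S")
        case True thus ?thesis unfolding ztot_def by (rule member_le_sum[OF _ _ fin]) auto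
      qed simp
    qed
    hence "\<And>j. \<not> z j > K" using False by (meson le_less_trans not_less)
    thus ?thesis using False by simp
  qed
  have "0 \<le> (\<Sum>j\<in>?S. (1 - x) * real (z j) - (1 - x ^ z j))"
    by (rule sum_nonneg) (rule scalar_bound(1)[OF x])
  moreover have "(\<Sum>j\<in>?S. (1 - x) * real (z j) - (1 - x ^ z j))
     \<le> (\<Sum>j\<in>?S. (1 - x) * ((1 - x ^ K) * real (z j) + (if z j > K then real (z j) else 0)))"
    by (rule sum_mono) (rule scalar_bound(2)[OF x])
  moreover have "(\<Sum>j\<in>?S. (1 - x) * ((1 - x ^ K) * real (z j) + (if z j > K then real (z j) else 0)))
     = (1 - x) * ((1 - x ^ K) * real (ztot z) + (\<Sum>j\<in>?S. (if z j > K then real (z j) else 0)))"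
    unfolding zt sum_distrib_left sum.distrib distrib_left by simp
  moreover have "(1 - x) * ((1 - x ^ K) * real (ztot z) + (\<Sum>j\<in>?S. (if z j > K then real (z j) else 0)))
     \<le> (1 - x) * ((1 - x ^ K) * real (ztot z) + (if ztot z > K then real (ztot z) else 0))"
    using tail x by (intro mult_left_mono) auto
  ultimately show "0 \<le> (1 - x) * real (ztot z) - (\<Sum>j\<in>?S. 1 - x ^ z j) \<and>
         (1 - x) * real (ztot z) - (\<Sum>j\<in>?S. 1 - x ^ z j)
         \<le> (1 - x) * ((1 - x ^ K) * real (ztot z) + (if ztot z > K then real (ztot z) else 0))"
    unfolding eq by linarith
qed


theorem theorem3:
  fixes P :: offspring
  assumes "gwbp_inf P"
    and "\<forall>i. integrable (measure_pmf (P i)) (\<lambda>z. real (ztot z))"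
    and "in_M1 P"
    and "\<not> (\<forall>i s. (\<forall>j. s j \<in> {0..1}) \<longrightarrow> pgf P i s = (\<Sum>j. meanM P i j * s j))"
  shows "((\<lambda>x::real. SUP i. ((1 - x) * meanTot P i
              - measure_pmf.expectation (P i) (\<lambda>z. 1 - x ^ ztot z))
              / ((1 - x) * meanTot P i)) \<longlongrightarrow> 0) (at_left 1) \<and>
         ((\<lambda>x::real. SUP i. ((1 - x) * meanTot P i
              - (\<Sum>j. measure_pmf.expectation (P i) (\<lambda>z. 1 - x ^ z j)))
              / ((1 - x) * meanTot P i)) \<longlongrightarrow> 0) (at_left 1)"
proof -
  have intZ: "\<And>i. integrable (measure_pmf (P i)) (\<lambda>z. real (ztot z))" using assms(2) by blast
  have fin: "\<And>i z. z \<in> set_pmf (P i) \<Longrightarrow> finite {j. z j \<noteq> 0}"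
    using assms(1) unfolding gwbp_inf_def by blast
  define T where "T K i = measure_pmf.expectation (P i)
                      (\<lambda>z. if ztot z > K then real (ztot z) else 0) / meanTot P i" for K i
  have lim: "(\<lambda>K. SUP i. T K i) \<longlonglongrightarrow> 0"
    using assms(3) unfolding in_M1_def T_def by blast
  have T0: "0 \<le> T K i" for K i
    unfolding T_def meanTot_def using tail_le(1)[OF intZ] by (simp add: divide_nonneg_nonneg)
  have T1: "T K i \<le> 1" for K i
  proof -
    have a: "measure_pmf.expectation (P i) (\<lambda>z. if ztot z > K then real (ztot z) else 0) \<le> meanTot P i"
      unfolding meanTot_def by (rule tail_le(2)[OF intZ])
    have "0 \<le> meanTot P i" unfolding meanTot_def by simp
    with a show ?thesis unfolding T_def
      by (cases "meanTot P i = 0") (auto simp: divide_le_eq_1)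
  qed
  have int1: "integrable (measure_pmf (P i)) (\<lambda>z. 1 - x ^ f z)"
    if "0 \<le> x" "x \<le> 1" for f :: "(nat \<Rightarrow> nat) \<Rightarrow> nat" and x :: real and i
    by (rule measure_pmf.integrable_const_bound[where B=1]) (use that in \<open>auto simp: power_le_one\<close>)
  show ?thesis
  proof
    show "((\<lambda>x::real. SUP i. ((1 - x) * meanTot P i
              - measure_pmf.expectation (P i) (\<lambda>z. 1 - x ^ ztot z))
              / ((1 - x) * meanTot P i)) \<longlongrightarrow> 0) (at_left 1)"
    proof (rule tend_lemma[OF _ T0 T1 lim])
      fix i K and x :: real assume x: "0 < x" "x < 1"
      have eq: "(1 - x) * meanTot P i - measure_pmf.expectation (P i) (\<lambda>z. 1 - x ^ ztot z)
         = measure_pmf.expectation (P i) (\<lambda>z. (1 - x) * real (ztot z) - (1 - x ^ ztot z))"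
        unfolding meanTot_def
        by (subst Bochner_Integration.integral_diff) (use x in \<open>auto intro: intZ int1\<close>)
      show "0 \<le> ((1 - x) * meanTot P i
              - measure_pmf.expectation (P i) (\<lambda>z. 1 - x ^ ztot z))
              / ((1 - x) * meanTot P i) \<and> ((1 - x) * meanTot P i
              - measure_pmf.expectation (P i) (\<lambda>z. 1 - x ^ ztot z))
              / ((1 - x) * meanTot P i) \<le> 1 - x ^ K + T K i"
        unfolding eq unfolding T_def meanTot_def
        by (rule ratio_bound[OF intZ x])
           (use x scalar_bound[of x] in \<open>auto intro!: intZ int1\<close>)
    qed
  next
    show "((\<lambda>x::real. SUP i. ((1 - x) * meanTot P i
              - (\<Sum>j. measure_pmf.expectation (P i) (\<lambda>z. 1 - x ^ z j)))
              / ((1 - x) * meanTot P i)) \<longlongrightarrow> 0) (at_left 1)"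
    proof (rule tend_lemma[OF _ T0 T1 lim])
      fix i K and x :: real assume x: "0 < x" "x < 1"
      define h where "h z = (\<Sum>j\<in>{j. z j \<noteq> 0}. 1 - x ^ z j)" for z :: "nat \<Rightarrow> nat"
      have AEb: "AE z in measure_pmf (P i). norm (h z) \<le> real (ztot z)"
        unfolding AE_measure_pmf_iff h_def using pt_lemma(3)[OF fin, of _ i x] x by auto
      have inth: "integrable (measure_pmf (P i)) h"
        by (rule Bochner_Integration.integrable_bound[OF intZ]) (use AEb in \<open>auto elim!: AE_mp\<close>)
      have "(\<lambda>n. \<Sum>j<n. measure_pmf.expectation (P i) (\<lambda>z. 1 - x ^ z j))
           \<longlonglongrightarrow> measure_pmf.expectation (P i) h"
      proof -
        have "(\<lambda>n. measure_pmf.expectation (P i) (\<lambda>z. \<Sum>j<n. 1 - x ^ z j))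
           \<longlonglongrightarrow> measure_pmf.expectation (P i) h"
        proof (rule integral_dominated_convergence[where w="\<lambda>z. real (ztot z)"])
          show "integrable (measure_pmf (P i)) (\<lambda>z. real (ztot z))" by (rule intZ)
          show "AE z in measure_pmf (P i). (\<lambda>n. \<Sum>j<n. 1 - x ^ z j) \<longlonglongrightarrow> h z"
            unfolding AE_measure_pmf_iff h_def
            using pt_lemma(1)[OF fin, of _ i x] x by (auto simp: sums_def)
          show "AE z in measure_pmf (P i). norm (\<Sum>j<n. 1 - x ^ z j) \<le> real (ztot z)" for n
            unfolding AE_measure_pmf_iff
            using pt_lemma(2)[OF fin, of _ i x] x by auto
        qed simp_all
        moreover have "measure_pmf.expectation (P i) (\<lambda>z. \<Sum>j<n. 1 - x ^ z j)
            = (\<Sum>j<n. measure_pmf.expectation (P i) (\<lambda>z. 1 - x ^ z j))" for n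
          by (rule Bochner_Integration.integral_sum) (rule int1, use x in auto)
        ultimately show ?thesis by simp
      qed
      hence "(\<Sum>j. measure_pmf.expectation (P i) (\<lambda>z. 1 - x ^ z j)) = measure_pmf.expectation (P i) h"
        by (intro sums_unique[symmetric]) (simp add: sums_def)
      hence eq: "(1 - x) * meanTot P i - (\<Sum>j. measure_pmf.expectation (P i) (\<lambda>z. 1 - x ^ z j))
         = measure_pmf.expectation (P i) (\<lambda>z. (1 - x) * real (ztot z) - h z)"
        unfolding meanTot_def
        by (subst Bochner_Integration.integral_diff) (use x in \<open>auto intro: intZ inth\<close>)
      show "0 \<le> ((1 - x) * meanTot P i
              - (\<Sum>j. measure_pmf.expectation (P i) (\<lambda>z. 1 - x ^ z j)))
              / ((1 - x) * meanTot P i) \<and> ((1 - x) * meanTot P i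
              - (\<Sum>j. measure_pmf.expectation (P i) (\<lambda>z. 1 - x ^ z j)))
              / ((1 - x) * meanTot P i) \<le> 1 - x ^ K + T K i"
        unfolding eq unfolding T_def meanTot_def
      proof (rule ratio_bound[OF intZ x])
        show "integrable (measure_pmf (P i)) (\<lambda>z. (1 - x) * real (ztot z) - h z)"
          by (intro Bochner_Integration.integrable_diff integrable_mult_right intZ inth)
      qed (use x pt_lemma(4)[OF fin, of _ i x] in \<open>auto simp: h_def\<close>)
    qed
  qed
qed

end
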